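(* Let $d\ge2$ and let $b,c\ge0$ be real with $a=\frac1d\big(1-(b+c)\frac{d(d-1)}2\big)\ge0$, and let $$\rho_{bc}=a\sum_{i=0}^{d-1}|ii\rangle\langle ii|+b\sum_{i<j}|\psi^-_{ij}\rangle\langle\psi^-_{ij}|+c\sum_{i<j}|\psi^+_{ij}\rangle\langle\psi^+_{ij}|.$$ If $\rho_{bc}^{PT}\ge0$, then $\rho_{bc}$ is separable.
   Context: $|\psi^{\pm}_{ij}\rangle=\frac1{\sqrt2}(|ij\rangle\pm|ji\rangle)$, sums over $0\le i<j\le d-1$. $\rho^{PT}$ is the partial transpose on the second factor, $\langle ij|\rho^{PT}|kl\rangle=\langle il|\rho|kj\rangle$. A bipartite state is separable if it can be written as $\sum_ip_i|\alpha_i\rangle\langle\alpha_i|\otimes|\beta_i\rangle\langle\beta_i|$ with $p_i\ge0$. *)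

theory Defs
  imports Complex_Main
begin

text \<open>Operators on C^d (x) C^d are represented by their matrix entries
  rho (i,j) (k,l) = <ij|rho|kl>, with indices in {0..<d} x {0..<d}.
  Vectors of C^d (x) C^d are functions nat x nat => complex, vectors of C^d
  are functions nat => complex (only entries with index < d matter).\<close>

type_synonym op2 = "nat \<times> nat \<Rightarrow> nat \<times> nat \<Rightarrow> complex"

definition idx :: "nat \<Rightarrow> (nat \<times> nat) set" where
  "idx d = {0..<d} \<times> {0..<d}"

definition proj :: "(nat \<times> nat \<Rightarrow> complex) \<Rightarrow> op2" where
  "proj v = (\<lambda>x y. v x * cnj (v y))"

definition ket_ii :: "nat \<Rightarrow> nat \<times> nat \<Rightarrow> complex" where
  "ket_ii i = (\<lambda>x. if x = (i, i) then 1 else 0)"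

definition psi_minus :: "nat \<Rightarrow> nat \<Rightarrow> nat \<times> nat \<Rightarrow> complex" where
  "psi_minus i j = (\<lambda>x. ((if x = (i, j) then 1 else 0) - (if x = (j, i) then 1 else 0))
                         / complex_of_real (sqrt 2))"

definition psi_plus :: "nat \<Rightarrow> nat \<Rightarrow> nat \<times> nat \<Rightarrow> complex" where
  "psi_plus i j = (\<lambda>x. ((if x = (i, j) then 1 else 0) + (if x = (j, i) then 1 else 0))
                         / complex_of_real (sqrt 2))"

definition coef_a :: "nat \<Rightarrow> real \<Rightarrow> real \<Rightarrow> real" where
  "coef_a d b c = (1 - (b + c) * (real d * (real d - 1) / 2)) / real d"

definition rho_bc :: "nat \<Rightarrow> real \<Rightarrow> real \<Rightarrow> op2" where
  "rho_bc d b c = (\<lambda>x y.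
      complex_of_real (coef_a d b c) * (\<Sum>i<d. proj (ket_ii i) x y)
    + complex_of_real b * (\<Sum>(i, j)\<in>{(i, j). i < j \<and> j < d}. proj (psi_minus i j) x y)
    + complex_of_real c * (\<Sum>(i, j)\<in>{(i, j). i < j \<and> j < d}. proj (psi_plus i j) x y))"

definition partial_transpose :: "op2 \<Rightarrow> op2" where
  "partial_transpose rho = (\<lambda>(i, j) (k, l). rho (i, l) (k, j))"

text \<open>Positive semidefiniteness on C^d (x) C^d: <v|rho|v> is real and nonnegative
  for every vector v (over C this also forces Hermiticity).\<close>
definition psd :: "nat \<Rightarrow> op2 \<Rightarrow> bool" where
  "psd d rho \<longleftrightarrow> (\<forall>v :: nat \<times> nat \<Rightarrow> complex.
      let q = (\<Sum>x\<in>idx d. \<Sum>y\<in>idx d. cnj (v x) * rho x y * v y)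
      in q \<in> \<real> \<and> Re q \<ge> 0)"

definition separable :: "nat \<Rightarrow> op2 \<Rightarrow> bool" where
  "separable d rho \<longleftrightarrow> (\<exists>(n::nat) (p :: nat \<Rightarrow> real) (\<alpha> :: nat \<Rightarrow> nat \<Rightarrow> complex)
      (\<beta> :: nat \<Rightarrow> nat \<Rightarrow> complex).
      (\<forall>k<n. p k \<ge> 0) \<and>
      (\<forall>x\<in>idx d. \<forall>y\<in>idx d. rho x y =
         (\<Sum>k<n. complex_of_real (p k) * (\<alpha> k (fst x) * cnj (\<alpha> k (fst y)))
                                      * (\<beta> k (snd x) * cnj (\<beta> k (snd y))))))"

end

theory Submission
  imports Defs "HOL-Library.FuncSet"
begin


lemma sep_zero: "separable d (\<lambda>x y. 0)"
  unfolding separable_def by (rule exI[of _ 0]) auto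

lemma sep_cong:
  assumes "separable d r" "\<And>x y. x \<in> idx d \<Longrightarrow> y \<in> idx d \<Longrightarrow> r x y = r' x y"
  shows "separable d r'"
proof -
  obtain n :: nat and p a b where h: "\<forall>k<n. p k \<ge> 0"
    "\<forall>x\<in>idx d. \<forall>y\<in>idx d. r x y = (\<Sum>k<n. complex_of_real (p k) * (a k (fst x) * cnj (a k (fst y)))
                                      * (b k (snd x) * cnj (b k (snd y))))"
    using assms(1) unfolding separable_def by (elim exE conjE) blast
  show ?thesis unfolding separable_def
    apply (rule exI[of _ n], rule exI[of _ p], rule exI[of _ a], rule exI[of _ b])
    using h assms(2) by simp
qed

lemma sep_add:
  assumes "separable d r1" "separable d r2"
  shows "separable d (\<lambda>x y. r1 x y + r2 x y)"
proof -
  obtain n1 :: nat and p1 a1 b1 where h1: "\<forall>k<n1. p1 k \<ge> 0"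
    "\<forall>x\<in>idx d. \<forall>y\<in>idx d. r1 x y = (\<Sum>k<n1. complex_of_real (p1 k) * (a1 k (fst x) * cnj (a1 k (fst y)))
                                      * (b1 k (snd x) * cnj (b1 k (snd y))))"
    using assms(1) unfolding separable_def by (elim exE conjE) blast
  obtain n2 :: nat and p2 a2 b2 where h2: "\<forall>k<n2. p2 k \<ge> 0"
    "\<forall>x\<in>idx d. \<forall>y\<in>idx d. r2 x y = (\<Sum>k<n2. complex_of_real (p2 k) * (a2 k (fst x) * cnj (a2 k (fst y)))
                                      * (b2 k (snd x) * cnj (b2 k (snd y))))"
    using assms(2) unfolding separable_def by (elim exE conjE) blast
  define p where "p k = (if k < n1 then p1 k else p2 (k - n1))" for k
  define a where "a k = (if k < n1 then a1 k else a2 (k - n1))" for k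
  define b where "b k = (if k < n1 then b1 k else b2 (k - n1))" for k
  let ?g = "\<lambda>k x y. complex_of_real (p k) * (a k (fst x) * cnj (a k (fst y))) * (b k (snd x) * cnj (b k (snd y)))"
  have split0: "(\<Sum>k<n1+m. G k) = (\<Sum>k<n1. G k) + (\<Sum>k<m. G (n1 + k))" for G :: "nat \<Rightarrow> complex" and m
    by (induct m) (simp_all add: add.assoc)
  have split: "(\<Sum>k<n1+n2. ?g k x y) = (\<Sum>k<n1. ?g k x y) + (\<Sum>k<n2. ?g (n1 + k) x y)" for x y
    by (rule split0)
  show ?thesis unfolding separable_def
  proof (intro exI conjI ballI allI impI)
    show "k < n1 + n2 \<Longrightarrow> 0 \<le> p k" for k using h1(1) h2(1) by (auto simp: p_def)
    fix x y assume "x \<in> idx d" "y \<in> idx d"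
    then show "r1 x y + r2 x y = (\<Sum>k<n1+n2. ?g k x y)"
      unfolding split using h1(2) h2(2) by (simp add: p_def a_def b_def)
  qed
qed

lemma sep_scale:
  assumes "separable d r" "q \<ge> 0"
  shows "separable d (\<lambda>x y. complex_of_real q * r x y)"
proof -
  obtain n :: nat and p a b where h: "\<forall>k<n. p k \<ge> 0"
    "\<forall>x\<in>idx d. \<forall>y\<in>idx d. r x y = (\<Sum>k<n. complex_of_real (p k) * (a k (fst x) * cnj (a k (fst y)))
                                      * (b k (snd x) * cnj (b k (snd y))))"
    using assms(1) unfolding separable_def by (elim exE conjE) blast
  have H1: "\<forall>k<n. 0 \<le> q * p k" using h(1) assms(2) by simp
  have H2: "\<forall>x\<in>idx d. \<forall>y\<in>idx d. complex_of_real q * r x y = (\<Sum>k<n. complex_of_real (q * p k) * (a k (fst x) * cnj (a k (fst y)))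
                                      * (b k (snd x) * cnj (b k (snd y))))"
    using h(2) by (simp add: sum_distrib_left mult.assoc)
  show ?thesis unfolding separable_def
    apply (rule exI[of _ n], rule exI[of _ "\<lambda>k. q * p k"], rule exI[of _ a], rule exI[of _ b])
    using H1 H2 by (intro conjI)
qed

lemma sep_prod:
  "separable d (\<lambda>x y. (\<alpha> (fst x) * cnj (\<alpha> (fst y))) * (\<beta> (snd x) * cnj (\<beta> (snd y))))"
  unfolding separable_def
  by (rule exI[of _ 1], rule exI[of _ "\<lambda>_. 1"], rule exI[of _ "\<lambda>_. \<alpha>"], rule exI[of _ "\<lambda>_. \<beta>"]) simp

lemma sep_sum:
  assumes "finite A" "\<And>i. i \<in> A \<Longrightarrow> separable d (r i)"
  shows "separable d (\<lambda>x y. \<Sum>i\<in>A. r i x y)"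
  using assms
proof (induction A rule: finite_induct)
  case empty
  then show ?case using sep_zero by simp
next
  case (insert a A)
  then show ?case using sep_add[of d "r a" "\<lambda>x y. \<Sum>i\<in>A. r i x y"] by simp
qed



lemma root4:
  assumes "p \<le> 2" "q \<le> 2"
  shows "(\<Sum>r<4. \<i> ^ (r * p) * (- \<i>) ^ (r * q)) = (if p = q then 4 else (0::complex))"
proof -
  have "p \<in> {0,1,2}" "q \<in> {0,1,2}" using assms by auto
  then show ?thesis by (auto simp: eval_nat_numeral power_mult_distrib)
qed

lemma comb_eq:
  fixes x1 x2 y1 y2 :: nat
  assumes "x1 \<in> S" "x2 \<in> S" "y1 \<in> S" "y2 \<in> S"
  shows "(\<forall>m\<in>S. (if x1 = m then 1 else 0) + (if x2 = m then 1 else 0) =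
                 (if y1 = m then 1 else 0) + (if y2 = m then (1::nat) else 0))
     \<longleftrightarrow> ((x1 = y1 \<and> x2 = y2) \<or> (x1 = y2 \<and> x2 = y1))"
proof
  assume H: "\<forall>m\<in>S. (if x1 = m then 1 else 0) + (if x2 = m then 1 else 0) =
                 (if y1 = m then 1 else 0) + (if y2 = m then (1::nat) else 0)"
  have a: "x1 = y1 \<or> x1 = y2" using H[rule_format, OF assms(1)] by (auto split: if_splits)
  have b: "x2 = y1 \<or> x2 = y2" using H[rule_format, OF assms(2)] by (auto split: if_splits)
  have c: "y1 = x1 \<or> y1 = x2" using H[rule_format, OF assms(3)] by (auto split: if_splits)
  have e: "y2 = x1 \<or> y2 = x2" using H[rule_format, OF assms(4)] by (auto split: if_splits)
  show "(x1 = y1 \<and> x2 = y2) \<or> (x1 = y2 \<and> x2 = y1)"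
    using a b c e H[rule_format, OF assms(1)] by (auto split: if_splits)
qed auto

lemma tw_sum:
  fixes x1 x2 y1 y2 :: nat
  assumes S: "finite S" and in_S: "x1 \<in> S" "x2 \<in> S" "y1 \<in> S" "y2 \<in> S"
  shows "(\<Sum>f\<in>PiE S (\<lambda>_. {..<4::nat}). \<i> ^ f x1 * \<i> ^ f x2 * (- \<i>) ^ f y1 * (- \<i>) ^ f y2)
       = (if (x1 = y1 \<and> x2 = y2) \<or> (x1 = y2 \<and> x2 = y1) then 4 ^ card S else 0)"
proof -
  define P where "P m = (if x1 = m then 1 else 0) + (if x2 = m then 1 else (0::nat))" for m
  define Q where "Q m = (if y1 = m then 1 else 0) + (if y2 = m then 1 else (0::nat))" for m
  define g where "g m r = \<i> ^ (r * P m) * (- \<i>) ^ (r * Q m)" for m r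
  have gm: "g m k = (if x1 = m then \<i> ^ k else 1) * (if x2 = m then \<i> ^ k else 1)
                  * ((if y1 = m then (- \<i>) ^ k else 1) * (if y2 = m then (- \<i>) ^ k else 1))" for m k
    unfolding g_def P_def Q_def by (simp add: distrib_left power_add)
  have prodg: "(\<Prod>m\<in>S. g m (f m)) = \<i> ^ f x1 * \<i> ^ f x2 * (- \<i>) ^ f y1 * (- \<i>) ^ f y2" for f
    unfolding gm prod.distrib using S in_S by (simp add: prod.delta mult.assoc)
  have "(\<Sum>f\<in>PiE S (\<lambda>_. {..<4::nat}). \<i> ^ f x1 * \<i> ^ f x2 * (- \<i>) ^ f y1 * (- \<i>) ^ f y2)
      = (\<Sum>f\<in>PiE S (\<lambda>_. {..<4::nat}). \<Prod>m\<in>S. g m (f m))"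
    by (simp add: prodg)
  also have "\<dots> = (\<Prod>m\<in>S. \<Sum>r<4. g m r)"
    by (rule prod_sum_PiE[symmetric]) (use S in auto)
  also have "\<dots> = (\<Prod>m\<in>S. if P m = Q m then 4 else 0)"
  proof (rule prod.cong)
    fix m assume "m \<in> S"
    have "P m \<le> 2" "Q m \<le> 2" unfolding P_def Q_def by auto
    then show "(\<Sum>r<4. g m r) = (if P m = Q m then 4 else 0)" unfolding g_def by (rule root4)
  qed simp
  also have "\<dots> = (if \<forall>m\<in>S. P m = Q m then 4 ^ card S else 0)"
    using S by (auto simp: prod_zero_iff)
  also have "(\<forall>m\<in>S. P m = Q m) \<longleftrightarrow> ((x1 = y1 \<and> x2 = y2) \<or> (x1 = y2 \<and> x2 = y1))"
    unfolding P_def Q_def by (rule comb_eq[OF in_S])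
  finally show ?thesis .
qed

definition tw_a :: "nat set \<Rightarrow> (nat \<Rightarrow> nat) \<Rightarrow> nat \<Rightarrow> complex" where
  "tw_a S f m = (if m \<in> S then \<i> ^ f m else 0)"

definition tw :: "nat set \<Rightarrow> (nat \<Rightarrow> complex) \<Rightarrow> op2" where
  "tw S s = (\<lambda>x y. \<Sum>f\<in>PiE S (\<lambda>_. {..<4::nat}).
      (tw_a S f (fst x) * cnj (tw_a S f (fst y))) *
      ((s (snd x) * tw_a S f (snd x)) * cnj (s (snd y) * tw_a S f (snd y))))"

lemma tw_val:
  assumes S: "finite S"
  shows "tw S s x y = (if fst x \<in> S \<and> snd x \<in> S \<and> fst y \<in> S \<and> snd y \<in> S \<and> (x = y \<or> x = prod.swap y)
                        then 4 ^ card S * (s (snd x) * cnj (s (snd y))) else 0)"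
proof (cases "fst x \<in> S \<and> snd x \<in> S \<and> fst y \<in> S \<and> snd y \<in> S")
  case True
  obtain x1 x2 y1 y2 where xy: "x = (x1, x2)" "y = (y1, y2)" by (cases x, cases y) auto
  have in_S: "x1 \<in> S" "x2 \<in> S" "y1 \<in> S" "y2 \<in> S" using True xy by auto
  have "tw S s x y = (\<Sum>f\<in>PiE S (\<lambda>_. {..<4::nat}).
         (s x2 * cnj (s y2)) * (\<i> ^ f x1 * \<i> ^ f x2 * (- \<i>) ^ f y1 * (- \<i>) ^ f y2))"
    unfolding tw_def tw_a_def xy using in_S
    by (intro sum.cong refl) (simp add: mult_ac)
  also have "\<dots> = (s x2 * cnj (s y2)) * (if (x1 = y1 \<and> x2 = y2) \<or> (x1 = y2 \<and> x2 = y1) then 4 ^ card S else 0)"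
    by (simp add: sum_distrib_left[symmetric] tw_sum[OF S in_S])
  finally show ?thesis using in_S xy by auto
next
  case False
  then show ?thesis unfolding tw_def tw_a_def by auto
qed


definition dl :: "nat \<times> nat \<Rightarrow> nat \<times> nat \<Rightarrow> complex" where
  "dl u z = (if z = u then 1 else 0)"
lemma dl1: "(if x = (i, j) then 1 else 0) = dl x (i,j)" by (auto simp: dl_def)
lemma dl2: "(if x = (j, i) then 1 else 0) = dl (prod.swap x) (i,j)" by (cases x) (auto simp: dl_def)
lemma pm_val: "psi_minus i j x = (dl x (i,j) - dl (prod.swap x) (i,j)) / complex_of_real (sqrt 2)"
  unfolding psi_minus_def dl2[where x=x and i=i and j=j] dl1[where x=x and i=i and j=j] ..
lemma pp_val: "psi_plus i j x = (dl x (i,j) + dl (prod.swap x) (i,j)) / complex_of_real (sqrt 2)"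
  unfolding psi_plus_def dl2[where x=x and i=i and j=j] dl1[where x=x and i=i and j=j] ..
lemma s2: "complex_of_real (sqrt 2) * complex_of_real (sqrt 2) = 2"
  by (simp flip: of_real_mult)
lemma half_prod: "(A / complex_of_real (sqrt 2)) * (B / complex_of_real (sqrt 2)) = (1/2) * (A * B)"
proof -
  have "(A / complex_of_real (sqrt 2)) * (B / complex_of_real (sqrt 2)) = (A * B) / (complex_of_real (sqrt 2) * complex_of_real (sqrt 2))"
    by (rule times_divide_times_eq)
  then show ?thesis by (simp add: s2)
qed
lemma cnj_dl[simp]: "cnj (dl u z) = dl u z" by (simp add: dl_def)

lemma pm_eq: "proj (psi_minus i j) x y =
   (1/2) * ((dl x (i,j) - dl (prod.swap x) (i,j)) * (dl y (i,j) - dl (prod.swap y) (i,j)))"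
  unfolding proj_def pm_val by (simp only: complex_cnj_diff complex_cnj_divide cnj_dl complex_cnj_complex_of_real half_prod)

lemma pp_eq: "proj (psi_plus i j) x y =
   (1/2) * ((dl x (i,j) + dl (prod.swap x) (i,j)) * (dl y (i,j) + dl (prod.swap y) (i,j)))"
  unfolding proj_def pp_val by (simp only: complex_cnj_add complex_cnj_divide cnj_dl complex_cnj_complex_of_real half_prod)

lemma sum_dd: "finite P \<Longrightarrow> (\<Sum>z\<in>P. dl u z * dl w z) = (if u = w \<and> u \<in> P then 1 else 0)"
proof -
  assume "finite P"
  have "(\<Sum>z\<in>P. dl u z * dl w z) = (\<Sum>z\<in>P. if z = u then (if u = w then 1 else 0) else 0)"
    by (intro sum.cong) (auto simp: dl_def)
  also have "\<dots> = (if u = w \<and> u \<in> P then 1 else 0)" using \<open>finite P\<close> by simp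
  finally show ?thesis .
qed

definition PP :: "nat \<Rightarrow> (nat \<times> nat) set" where "PP d = {(i, j). i < j \<and> j < d}"

lemma fin_PP: "finite (PP d)"
  by (rule finite_subset[of _ "{..<d} \<times> {..<d}"]) (auto simp: PP_def)

lemma sum_pm: "(\<Sum>(i, j)\<in>PP d. proj (psi_minus i j) x y) = (1/2) *
   ((if x = y \<and> x \<in> PP d then 1 else 0) - (if x = prod.swap y \<and> x \<in> PP d then 1 else 0)
  - (if prod.swap x = y \<and> prod.swap x \<in> PP d then 1 else 0) + (if prod.swap x = prod.swap y \<and> prod.swap x \<in> PP d then 1 else 0))"
proof -
  have "(\<Sum>(i, j)\<in>PP d. proj (psi_minus i j) x y) = (\<Sum>z\<in>PP d. (1/2) * ((dl x z * dl y z - dl x z * dl (prod.swap y) z)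
      - dl (prod.swap x) z * dl y z + dl (prod.swap x) z * dl (prod.swap y) z))"
    by (intro sum.cong refl) (auto simp: pm_eq algebra_simps)
  also have "\<dots> = (1/2) * (((\<Sum>z\<in>PP d. dl x z * dl y z) - (\<Sum>z\<in>PP d. dl x z * dl (prod.swap y) z))
      - (\<Sum>z\<in>PP d. dl (prod.swap x) z * dl y z) + (\<Sum>z\<in>PP d. dl (prod.swap x) z * dl (prod.swap y) z))"
    by (simp only: sum_distrib_left[symmetric] sum.distrib sum_subtractf)
  finally show ?thesis by (simp add: sum_dd fin_PP)
qed

lemma sum_pp: "(\<Sum>(i, j)\<in>PP d. proj (psi_plus i j) x y) = (1/2) *
   ((if x = y \<and> x \<in> PP d then 1 else 0) + (if x = prod.swap y \<and> x \<in> PP d then 1 else 0)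
  + (if prod.swap x = y \<and> prod.swap x \<in> PP d then 1 else 0) + (if prod.swap x = prod.swap y \<and> prod.swap x \<in> PP d then 1 else 0))"
proof -
  have "(\<Sum>(i, j)\<in>PP d. proj (psi_plus i j) x y) = (\<Sum>z\<in>PP d. (1/2) * ((dl x z * dl y z + dl x z * dl (prod.swap y) z)
      + dl (prod.swap x) z * dl y z + dl (prod.swap x) z * dl (prod.swap y) z))"
    by (intro sum.cong refl) (auto simp: pp_eq algebra_simps)
  also have "\<dots> = (1/2) * (((\<Sum>z\<in>PP d. dl x z * dl y z) + (\<Sum>z\<in>PP d. dl x z * dl (prod.swap y) z))
      + (\<Sum>z\<in>PP d. dl (prod.swap x) z * dl y z) + (\<Sum>z\<in>PP d. dl (prod.swap x) z * dl (prod.swap y) z))"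
    by (simp only: sum_distrib_left[symmetric] sum.distrib)
  finally show ?thesis by (simp add: sum_dd fin_PP)
qed
lemma sum_K:
  assumes "x \<in> idx d"
  shows "(\<Sum>i<d. proj (ket_ii i) x y) = (if x = y \<and> fst x = snd x then 1 else 0)"
proof -
  have "(\<Sum>i<d. proj (ket_ii i) x y) = (\<Sum>i<d. if i = fst x then (if x = y \<and> fst x = snd x then 1 else 0) else 0)"
    by (intro sum.cong refl) (cases x, auto simp: proj_def ket_ii_def)
  also have "\<dots> = (if x = y \<and> fst x = snd x then 1 else 0)" using assms by (auto simp: idx_def)
  finally show ?thesis .
qed

definition ent :: "nat \<Rightarrow> real \<Rightarrow> real \<Rightarrow> nat \<times> nat \<Rightarrow> nat \<times> nat \<Rightarrow> real" where
  "ent d b c x y = (if x = y then (if fst x = snd x then coef_a d b c else (b + c) / 2)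
     else if x = prod.swap y \<and> fst x \<noteq> snd x then (c - b) / 2 else 0)"

lemma PP_mem: "x \<in> idx d \<Longrightarrow> x \<in> PP d \<longleftrightarrow> fst x < snd x"
  by (cases x) (auto simp: idx_def PP_def)

lemma PP_mem2: "x \<in> idx d \<Longrightarrow> prod.swap x \<in> PP d \<longleftrightarrow> snd x < fst x"
  by (cases x) (auto simp: idx_def PP_def)

lemma rho_ent:
  assumes "x \<in> idx d" "y \<in> idx d"
  shows "rho_bc d b c x y = complex_of_real (ent d b c x y)"
proof -
  have "rho_bc d b c x y = complex_of_real (coef_a d b c) * (if x = y \<and> fst x = snd x then 1 else 0)
    + complex_of_real b * (\<Sum>(i, j)\<in>PP d. proj (psi_minus i j) x y)
    + complex_of_real c * (\<Sum>(i, j)\<in>PP d. proj (psi_plus i j) x y)"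
    unfolding rho_bc_def PP_def[symmetric] sum_K[OF assms(1)] ..
  also have "\<dots> = complex_of_real (ent d b c x y)"
    unfolding sum_pm sum_pp PP_mem[OF assms(1)] PP_mem2[OF assms(1)] ent_def
    by (cases x; cases y) (auto simp: field_simps)
  finally show ?thesis .
qed
lemma sum_diag:
  "(\<Sum>x\<in>A \<times> A. if fst x = snd x then F (fst x) else 0) = (\<Sum>m\<in>A. F m)" if "finite A"
proof -
  have "(\<Sum>x\<in>A \<times> A. if fst x = snd x then F (fst x) else 0) = (\<Sum>i\<in>A. \<Sum>j\<in>A. if i = j then F i else 0)"
    by (simp add: sum.cartesian_product split_def)
  also have "\<dots> = (\<Sum>m\<in>A. F m)" using that by simp
  finally show ?thesis .
qed

lemma quad_form:
  fixes A C :: real and w :: "nat \<Rightarrow> complex"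
  assumes "\<And>m m'. m < d \<Longrightarrow> m' < d \<Longrightarrow> G m m' = complex_of_real (if m = m' then A else C)"
  shows "(\<Sum>m<d. \<Sum>m'<d. cnj (w m) * G m m' * w m') =
     complex_of_real C * (cnj (\<Sum>m<d. w m) * (\<Sum>m<d. w m)) + complex_of_real (A - C) * (\<Sum>m<d. cnj (w m) * w m)"
proof -
  have inner: "(\<Sum>m'<d. cnj (w m) * G m m' * w m') = cnj (w m) * (complex_of_real C * (\<Sum>m<d. w m) + complex_of_real (A - C) * w m)"
    if "m < d" for m
  proof -
    have "(\<Sum>m'<d. cnj (w m) * G m m' * w m') = (\<Sum>m'<d. cnj (w m) * (complex_of_real C * w m') + (if m' = m then cnj (w m) * (complex_of_real (A - C) * w m) else 0))"
      by (intro sum.cong refl) (auto simp: assms that algebra_simps)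
    also have "\<dots> = cnj (w m) * (complex_of_real C * (\<Sum>m<d. w m)) + cnj (w m) * (complex_of_real (A - C) * w m)"
      using that by (simp add: sum.distrib sum_distrib_left)
    finally show ?thesis by (simp add: algebra_simps)
  qed
  have "(\<Sum>m<d. \<Sum>m'<d. cnj (w m) * G m m' * w m') = (\<Sum>m<d. cnj (w m) * (complex_of_real C * (\<Sum>m<d. w m) + complex_of_real (A - C) * w m))"
    by (intro sum.cong refl) (simp add: inner)
  also have "\<dots> = (\<Sum>m<d. complex_of_real C * (\<Sum>m<d. w m) * cnj (w m) + complex_of_real (A - C) * (cnj (w m) * w m))"
    by (intro sum.cong refl) (simp add: algebra_simps)
  also have "\<dots> = complex_of_real C * (\<Sum>m<d. w m) * (\<Sum>m<d. cnj (w m)) + complex_of_real (A - C) * (\<Sum>m<d. cnj (w m) * w m)"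
    by (simp add: sum.distrib sum_distrib_left)
  also have "\<dots> = complex_of_real C * (cnj (\<Sum>m<d. w m) * (\<Sum>m<d. w m)) + complex_of_real (A - C) * (\<Sum>m<d. cnj (w m) * w m)"
    by (simp add: cnj_sum)
  finally show ?thesis .
qed

lemma psd_diag:
  assumes "psd d rho"
  shows "let q = (\<Sum>m<d. \<Sum>m'<d. cnj (w m) * rho (m, m) (m', m') * w m') in q \<in> \<real> \<and> Re q \<ge> 0"
proof -
  define v where "v x = (if fst x = snd x then w (fst x) else 0)" for x :: "nat \<times> nat"
  have "(\<Sum>x\<in>idx d. \<Sum>y\<in>idx d. cnj (v x) * rho x y * v y) = (\<Sum>m<d. \<Sum>m'<d. cnj (w m) * rho (m, m) (m', m') * w m')"
  proof -
    have "(\<Sum>x\<in>idx d. \<Sum>y\<in>idx d. cnj (v x) * rho x y * v y) = (\<Sum>x\<in>idx d. if fst x = snd x then (\<Sum>m'<d. cnj (w (fst x)) * rho x (m', m') * w m') else 0)"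
    proof (intro sum.cong refl)
      fix x assume "x \<in> idx d"
      have "(\<Sum>y\<in>idx d. cnj (v x) * rho x y * v y) = (\<Sum>y\<in>{0..<d} \<times> {0..<d}. if fst y = snd y then cnj (v x) * rho x (fst y, fst y) * w (fst y) else 0)"
        unfolding idx_def v_def by (intro sum.cong refl) (auto simp: prod_eq_iff)
      also have "\<dots> = (\<Sum>m'<d. cnj (v x) * rho x (m', m') * w m')" unfolding atLeast0LessThan by (rule sum_diag) simp
      finally show "(\<Sum>y\<in>idx d. cnj (v x) * rho x y * v y) = (if fst x = snd x then (\<Sum>m'<d. cnj (w (fst x)) * rho x (m', m') * w m') else 0)"
        by (auto simp: v_def)
    qed
    also have "\<dots> = (\<Sum>m<d. \<Sum>m'<d. cnj (w m) * rho (m, m) (m', m') * w m')"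
      unfolding idx_def
      by (subst sum_diag[where F = "\<lambda>m. \<Sum>m'<d. cnj (w m) * rho (m, m) (m', m') * w m'", symmetric]) (auto intro!: sum.cong simp: prod_eq_iff atLeast0LessThan)
    finally show ?thesis .
  qed
  then show ?thesis using assms unfolding psd_def by metis
qed
lemma ineqs:
  assumes d: "d \<ge> 2" and P: "psd d (partial_transpose (rho_bc d b c))"
  shows "coef_a d b c - (c - b) / 2 \<ge> 0" "coef_a d b c + (real d - 1) * ((c - b) / 2) \<ge> 0"
proof -
  let ?A = "coef_a d b c" and ?C = "(c - b) / 2"
  have G: "partial_transpose (rho_bc d b c) (m, m) (m', m') = complex_of_real (if m = m' then ?A else ?C)"
    if "m < d" "m' < d" for m m'
  proof -
    have "partial_transpose (rho_bc d b c) (m, m) (m', m') = rho_bc d b c (m, m') (m', m)"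
      by (simp add: partial_transpose_def)
    also have "\<dots> = complex_of_real (ent d b c (m, m') (m', m))"
      by (rule rho_ent) (use that in \<open>auto simp: idx_def\<close>)
    finally show ?thesis by (auto simp: ent_def)
  qed
  note Q = quad_form[where G = "\<lambda>m m'. partial_transpose (rho_bc d b c) (m, m) (m', m')", OF G]
  define w1 where "w1 m = (if m = 0 then 1 else 0) - (if m = 1 then 1 else (0::complex))" for m :: nat
  have s1: "(\<Sum>m<d. w1 m) = 0" using d unfolding w1_def by (simp add: sum_subtractf)
  have s2': "(\<Sum>m<d. cnj (w1 m) * w1 m) = 2"
  proof -
    have "(\<Sum>m<d. cnj (w1 m) * w1 m) = (\<Sum>m<d. (if m = 0 then 1 else 0) + (if m = 1 then 1 else (0::complex)))"
      by (intro sum.cong refl) (auto simp: w1_def)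
    also have "\<dots> = 2" using d by (simp add: sum.distrib)
    finally show ?thesis .
  qed
  have "let q = (\<Sum>m<d. \<Sum>m'<d. cnj (w1 m) * partial_transpose (rho_bc d b c) (m, m) (m', m') * w1 m') in q \<in> \<real> \<and> Re q \<ge> 0"
    by (rule psd_diag[OF P])
  then have "Re (complex_of_real ?C * (cnj (\<Sum>m<d. w1 m) * (\<Sum>m<d. w1 m)) + complex_of_real (?A - ?C) * (\<Sum>m<d. cnj (w1 m) * w1 m)) \<ge> 0"
    by (simp only: Let_def Q)
  then have "Re (complex_of_real (?A - ?C) * 2) \<ge> 0" unfolding s1 s2' by simp
  then show "?A - ?C \<ge> 0" by simp
  have "let q = (\<Sum>m<d. \<Sum>m'<d. cnj ((\<lambda>_. 1) m) * partial_transpose (rho_bc d b c) (m, m) (m', m') * (\<lambda>_. 1) m') in q \<in> \<real> \<and> Re q \<ge> 0"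
    by (rule psd_diag[OF P])
  then have "Re (complex_of_real ?C * (cnj (\<Sum>m<d. (\<lambda>_. 1) m) * (\<Sum>m<d. (\<lambda>_. 1) m)) + complex_of_real (?A - ?C) * (\<Sum>m<d. cnj ((\<lambda>_. 1) m) * (\<lambda>_. 1) m)) \<ge> 0"
    by (simp only: Let_def Q)
  then have "Re (complex_of_real ?C * (of_nat d * of_nat d) + complex_of_real (?A - ?C) * of_nat d) \<ge> 0"
    by simp
  then have "real d * (?A + (real d - 1) * ?C) \<ge> 0" by (simp add: algebra_simps, argo)
  then show "?A + (real d - 1) * ?C \<ge> 0" using d by (simp add: zero_le_mult_iff)
qed


definition pt :: "nat \<Rightarrow> nat \<Rightarrow> nat \<times> nat \<Rightarrow> nat \<times> nat \<Rightarrow> real" where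
  "pt i j x y = (if fst x \<in> {i,j} \<and> snd x \<in> {i,j} \<and> fst y \<in> {i,j} \<and> snd y \<in> {i,j} \<and> (x = y \<or> x = prod.swap y)
     then (if snd x = j then -1 else 1) * (if snd y = j then -1 else 1) else 0)"

lemma inner1:
  assumes "i < d" "p < d"
  shows "(\<Sum>j\<in>{..<d} - {i}. if p = i \<or> p = j then 1 else 0) = (if p = i then real d - 1 else (1::real))"
proof (cases "p = i")
  case True
  then have "(\<Sum>j\<in>{..<d} - {i}. if p = i \<or> p = j then 1 else (0::real)) = real (card ({..<d} - {i}))" by simp
  also have "\<dots> = real d - 1" using assms by (simp add: card_Diff_singleton of_nat_diff)
  finally show ?thesis using True by simp
next
  case False
  then have "(\<Sum>j\<in>{..<d} - {i}. if p = i \<or> p = j then 1 else (0::real)) = (\<Sum>j\<in>{..<d} - {i}. if p = j then 1 else 0)"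
    by simp
  also have "\<dots> = 1" using False assms by (simp add: sum.delta)
  finally show ?thesis using False by simp
qed

lemma count1:
  assumes "p < d"
  shows "(\<Sum>i<d. \<Sum>j\<in>{..<d} - {i}. if p = i \<or> p = j then 1 else 0) = 2 * (real d - 1)"
proof -
  have "(\<Sum>i<d. \<Sum>j\<in>{..<d} - {i}. if p = i \<or> p = j then 1 else 0) = (\<Sum>i<d. 1 + (if i = p then real d - 2 else 0))"
    by (intro sum.cong refl) (use assms in \<open>auto simp: inner1\<close>)
  also have "\<dots> = real d + (real d - 2)" using assms by (simp add: sum.distrib)
  finally show ?thesis by simp
qed

lemma inner2:
  fixes d p q i :: nat
  assumes "i < d" "p < d" "q < d" "p \<noteq> q"
  shows "(\<Sum>j\<in>{..<d} - {i}. if (i = p \<and> j = q) \<or> (i = q \<and> j = p) then 1 else 0) = (if i = p \<or> i = q then 1 else (0::real))"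
proof -
  have "(\<Sum>j\<in>{..<d} - {i}. if (i = p \<and> j = q) \<or> (i = q \<and> j = p) then 1 else (0::real))
     = (\<Sum>j\<in>{..<d} - {i}. if j = (if i = p then q else p) then (if i = p \<or> i = q then 1 else 0) else 0)"
    by (intro sum.cong refl) (use assms in auto)
  also have "\<dots> = (if i = p \<or> i = q then 1 else (0::real))" using assms
    by (auto simp: sum.delta[of "{..<d} - {i}" "if i = p then q else p" "\<lambda>_. (if i = p \<or> i = q then 1 else (0::real))"])
  finally show ?thesis .
qed

lemma count2:
  fixes d p q :: nat
  assumes "p < d" "q < d" "p \<noteq> q"
  shows "(\<Sum>i<d. \<Sum>j\<in>{..<d} - {i}. if (i = p \<and> j = q) \<or> (i = q \<and> j = p) then 1 else 0) = (2::real)"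
proof -
  have "(\<Sum>i<d. \<Sum>j\<in>{..<d} - {i}. if (i = p \<and> j = q) \<or> (i = q \<and> j = p) then 1 else 0)
      = (\<Sum>i<d. (if i = p then 1 else 0) + (if i = q then 1 else (0::real)))"
    by (intro sum.cong refl) (use assms in \<open>auto simp: inner2\<close>)
  also have "\<dots> = 2" using assms by (simp add: sum.distrib sum.delta[of "{..<d}" p "\<lambda>_. (1::real)"] sum.delta[of "{..<d}" q "\<lambda>_. (1::real)"])
  finally show ?thesis .
qed

lemma pt_sum':
  assumes pq: "p < d" "q < d" "p' < d" "q' < d"
  shows "(\<Sum>i<d. \<Sum>j\<in>{..<d} - {i}. pt i j (p, q) (p', q')) =
    (if (p, q) = (p', q') then (if p = q then 2 * (real d - 1) else 2) else if (p, q) = (q', p') \<and> p \<noteq> q then -2 else 0)"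
proof -
  consider "p' = p \<and> q' = q \<and> p = q" | "p' = p \<and> q' = q \<and> p \<noteq> q" | "p' = q \<and> q' = p \<and> p \<noteq> q" | "\<not> (p' = p \<and> q' = q) \<and> \<not> (p' = q \<and> q' = p)" by blast
  then show ?thesis
  proof cases
    case 1
    have "(\<Sum>i<d. \<Sum>j\<in>{..<d} - {i}. pt i j (p, q) (p', q')) = (\<Sum>i<d. \<Sum>j\<in>{..<d} - {i}. if p = i \<or> p = j then 1 else 0)"
      using 1 by (intro sum.cong refl) (auto simp: pt_def)
    then show ?thesis using 1 count1[OF pq(1)] by simp
  next
    case 2
    have "(\<Sum>i<d. \<Sum>j\<in>{..<d} - {i}. pt i j (p, q) (p', q')) = (\<Sum>i<d. \<Sum>j\<in>{..<d} - {i}. if (i = p \<and> j = q) \<or> (i = q \<and> j = p) then 1 else 0)"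
      using 2 by (intro sum.cong refl) (auto simp: pt_def)
    then show ?thesis using 2 count2[OF pq(1,2)] by simp
  next
    case 3
    have "(\<Sum>i<d. \<Sum>j\<in>{..<d} - {i}. pt i j (p, q) (p', q')) = (\<Sum>i<d. \<Sum>j\<in>{..<d} - {i}. - (if (i = p \<and> j = q) \<or> (i = q \<and> j = p) then 1 else 0))"
      using 3 by (intro sum.cong refl) (auto simp: pt_def)
    also have "\<dots> = - 2" using 3 by (simp add: sum_negf count2[OF pq(1,2)])
    finally show ?thesis using 3 by simp
  next
    case 4
    then show ?thesis by (auto simp: pt_def)
  qed
qed

lemma pt_sum:
  assumes "x \<in> idx d" "y \<in> idx d"
  shows "(\<Sum>i<d. \<Sum>j\<in>{..<d} - {i}. pt i j x y) =
    (if x = y then (if fst x = snd x then 2 * (real d - 1) else 2) else if x = prod.swap y \<and> fst x \<noteq> snd x then -2 else 0)"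
  using assms pt_sum' by (cases x; cases y) (auto simp: idx_def)

lemma sep_tw: "finite S \<Longrightarrow> separable d (tw S s)"
  unfolding tw_def
proof (rule sep_sum)
  show "finite S \<Longrightarrow> finite (PiE S (\<lambda>_. {..<4::nat}))" by (simp add: finite_PiE)
  fix f
  show "separable d (\<lambda>x y. (tw_a S f (fst x) * cnj (tw_a S f (fst y))) *
      ((s (snd x) * tw_a S f (snd x)) * cnj (s (snd y) * tw_a S f (snd y))))"
    by (rule sep_prod[of d "tw_a S f" "\<lambda>m. s m * tw_a S f m"])
qed

definition sg :: "nat \<Rightarrow> nat \<Rightarrow> complex" where "sg j m = (if m = j then -1 else 1)"

lemma tw_pair:
  assumes "i \<noteq> j"
  shows "tw {i, j} (sg j) x y = complex_of_real (16 * pt i j x y)"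
proof -
  have c: "card {i, j} = 2" using assms by simp
  show ?thesis unfolding tw_val[OF finite.insertI[OF finite.insertI[OF finite.emptyI]]] c pt_def
    by (auto simp: sg_def)
qed

definition ee :: "nat \<Rightarrow> nat \<Rightarrow> complex" where "ee k m = (if m = k then 1 else 0)"

definition EE :: "nat \<times> nat \<Rightarrow> op2" where
  "EE z = (\<lambda>x y. (ee (fst z) (fst x) * cnj (ee (fst z) (fst y))) * (ee (snd z) (snd x) * cnj (ee (snd z) (snd y))))"

lemma sep_EE: "separable d (\<lambda>x y. \<Sum>z\<in>idx d. complex_of_real (wt z) * EE z x y)" if "\<And>z. wt z \<ge> 0"
  by (rule sep_sum) (auto simp: idx_def EE_def intro!: sep_scale sep_prod that)

lemma EE_val: "EE z x y = (if z = x then (if x = y then 1 else 0) else 0)"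
  by (cases x; cases y; cases z) (auto simp: EE_def ee_def)

lemma sum_EE:
  assumes "x \<in> idx d"
  shows "(\<Sum>z\<in>idx d. complex_of_real (wt z) * EE z x y) = complex_of_real (if x = y then wt x else 0)"
proof -
  have "(\<Sum>z\<in>idx d. complex_of_real (wt z) * EE z x y) = (\<Sum>z\<in>idx d. if z = x then complex_of_real (if x = y then wt x else 0) else 0)"
    by (intro sum.cong refl) (auto simp: EE_val)
  also have "\<dots> = complex_of_real (if x = y then wt x else 0)"
    using assms by (simp add: sum.delta[of "idx d" x] idx_def)
  finally show ?thesis .
qed

theorem mainTheorem7:
  fixes d :: nat and b c :: real
  assumes "d \<ge> 2" and "b \<ge> 0" and "c \<ge> 0" and "coef_a d b c \<ge> 0"
    and "psd d (partial_transpose (rho_bc d b c))"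
  shows "separable d (rho_bc d b c)"
proof -
  define A where "A = coef_a d b c"
  define C where "C = (c - b) / 2"
  have i1: "A - C \<ge> 0" and i2: "A + (real d - 1) * C \<ge> 0"
    using ineqs[OF assms(1) assms(5)] unfolding A_def C_def by auto
  show ?thesis
  proof (cases "C \<ge> 0")
    case True
    define wt where "wt z = (if fst z = snd z then A - C else (b + c) / 2 - C)" for z :: "nat \<times> nat"
    have wt0: "wt z \<ge> 0" for z using i1 assms(2) by (simp add: wt_def C_def)
    let ?r = "\<lambda>x y. complex_of_real (C / 4 ^ d) * tw {..<d} (\<lambda>_. 1) x y + (\<Sum>z\<in>idx d. complex_of_real (wt z) * EE z x y)"
    have Cp: "C / 4 ^ d \<ge> 0" using True by simp
    have "separable d ?r"
      by (intro sep_add sep_scale sep_tw sep_EE wt0 Cp) auto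
    then show ?thesis
    proof (rule sep_cong)
      fix x y assume xy: "x \<in> idx d" "y \<in> idx d"
      have "?r x y = complex_of_real (C / 4 ^ d) * (if x = y \<or> x = prod.swap y then 4 ^ d else 0) + complex_of_real (if x = y then wt x else 0)"
        using xy unfolding sum_EE[OF xy(1)] tw_val[OF finite_lessThan] by (auto simp: idx_def)
      also have "\<dots> = complex_of_real (ent d b c x y)"
        unfolding ent_def wt_def A_def C_def by (cases x; cases y) auto
      finally show "?r x y = rho_bc d b c x y" using rho_ent[OF xy] by simp
    qed
  next
    case False
    define wt where "wt z = (if fst z = snd z then A + (real d - 1) * C else (b + c) / 2 + C)" for z :: "nat \<times> nat"
    have bc: "(b + c) / 2 + C = c" by (simp add: C_def field_simps)
    have wt0: "wt z \<ge> 0" for z using i2 assms(3) by (simp add: wt_def bc)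
    let ?r = "\<lambda>x y. complex_of_real (- C / 32) * (\<Sum>i<d. \<Sum>j\<in>{..<d} - {i}. tw {i, j} (sg j) x y) + (\<Sum>z\<in>idx d. complex_of_real (wt z) * EE z x y)"
    have "separable d ?r"
      using False by (intro sep_add sep_scale sep_sum sep_tw sep_EE wt0) auto
    then show ?thesis
    proof (rule sep_cong)
      fix x y assume xy: "x \<in> idx d" "y \<in> idx d"
      have "(\<Sum>i<d. \<Sum>j\<in>{..<d} - {i}. tw {i, j} (sg j) x y) = (\<Sum>i<d. \<Sum>j\<in>{..<d} - {i}. complex_of_real (16 * pt i j x y))"
        by (intro sum.cong refl) (auto simp: tw_pair)
      also have "\<dots> = complex_of_real (16 * (\<Sum>i<d. \<Sum>j\<in>{..<d} - {i}. pt i j x y))"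
        by (simp add: sum_distrib_left)
      finally have "?r x y = complex_of_real (- C / 32) * complex_of_real (16 * (if x = y then (if fst x = snd x then 2 * (real d - 1) else 2) else if x = prod.swap y \<and> fst x \<noteq> snd x then -2 else 0))
          + complex_of_real (if x = y then wt x else 0)"
        unfolding sum_EE[OF xy(1)] pt_sum[OF xy] by simp
      also have "\<dots> = complex_of_real (ent d b c x y)"
        unfolding ent_def wt_def A_def C_def by (cases x; cases y) (auto simp: field_simps)
      finally show "?r x y = rho_bc d b c x y" using rho_ent[OF xy] by simp
    qed
  qed
qed

end
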